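(* Let $k\ge1$ and let $a_1,\dots,a_k,b_1,\dots,b_k$ be $2k$ distinct integers. Put $D=\prod_{i=1}^k\prod_{j=1}^k|a_i-b_j|$. Then $$D\ge (2/3)^k\bigl(1!\,2!\cdots(2k-1)!\bigr)^{1/2}.$$ *)

theory Defs
  imports Complex_Main
begin

end

theory Submission
  imports Defs "Jordan_Normal_Form.Determinant"
begin

lemma det_schur:
  fixes A :: "real mat"
  assumes A: "A \<in> carrier_mat (Suc n) (Suc n)" and a0: "A $$ (0,0) \<noteq> 0"
  shows "det A = A $$ (0,0) * det (mat n n (\<lambda>(i,j). A $$ (Suc i, Suc j) - A $$ (Suc i, 0) * A $$ (0, Suc j) / A $$ (0,0)))"
proof -
  define S where "S = mat n n (\<lambda>(i,j). A $$ (Suc i, Suc j) - A $$ (Suc i, 0) * A $$ (0, Suc j) / A $$ (0,0))"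
  define L :: "real mat" where "L = mat (Suc n) (Suc n) (\<lambda>(i,j). if i = j then 1 else if j = 0 then A $$ (i,0) / A $$ (0,0) else 0)"
  define U :: "real mat" where "U = mat (Suc n) (Suc n) (\<lambda>(i,j). if i = 0 then A $$ (0,j) else if j = 0 then 0 else S $$ (i - 1, j - 1))"
  have Lc: "L \<in> carrier_mat (Suc n) (Suc n)" and Uc: "U \<in> carrier_mat (Suc n) (Suc n)"
    unfolding L_def U_def by auto
  have "A = L * U"
  proof (rule eq_matI)
    fix i j assume i: "i < dim_row (L * U)" and j: "j < dim_col (L * U)"
    hence i': "i < Suc n" and j': "j < Suc n" using Lc Uc by auto
    have "(L * U) $$ (i,j) = (\<Sum>l<Suc n. L $$ (i,l) * U $$ (l,j))"
      using i' j' Lc Uc by (simp add: scalar_prod_def atLeast0LessThan)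
    also have "\<dots> = A $$ (i,j)"
    proof (cases "i = 0")
      case True
      then show ?thesis using i' j' unfolding L_def U_def
        by (simp add: if_distrib[of "\<lambda>x. x * _"] cong: if_cong)
    next
      case False
      have "(\<Sum>l<Suc n. L $$ (i,l) * U $$ (l,j)) = (\<Sum>l\<in>{0,i}. L $$ (i,l) * U $$ (l,j))"
        by (rule sum.mono_neutral_right) (use i' False in \<open>auto simp: L_def\<close>)
      also have "\<dots> = A $$ (i,j)"
        using False i' j' a0 unfolding L_def U_def S_def by (auto simp: field_simps)
      finally show ?thesis .
    qed
    finally show "A $$ (i,j) = (L * U) $$ (i,j)" by simp
  qed (use A Lc Uc in auto)
  hence "det A = det L * det U" using det_mult[OF Lc Uc] by simp
  moreover have "det L = 1"
    by (subst det_lower_triangular[OF _ Lc]) (auto simp: L_def prod_list_diag_prod)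
  moreover have "det U = A $$ (0,0) * det S"
  proof -
    have "det U = (\<Sum>i<Suc n. U $$ (i,0) * cofactor U i 0)"
      by (rule laplace_expansion_column[OF Uc]) simp
    also have "\<dots> = U $$ (0,0) * cofactor U 0 0"
      by (subst sum.lessThan_Suc_shift) (simp add: U_def)
    also have "mat_delete U 0 0 = S"
      by (rule eq_matI) (auto simp: mat_delete_def U_def S_def)
    hence "cofactor U 0 0 = det S" by (simp add: cofactor_def)
    finally show ?thesis by (simp add: U_def)
  qed
  ultimately show ?thesis by (simp add: S_def)
qed

lemma det_zero_row0:
  fixes A :: "real mat"
  assumes A: "A \<in> carrier_mat (Suc n) (Suc n)" and z: "\<And>j. j < Suc n \<Longrightarrow> A $$ (0,j) = 0"
  shows "det A = 0"
proof -
  have "det A = (\<Sum>p\<in>{p. p permutes {0..<Suc n}}. signof p * (\<Prod>i = 0..<Suc n. A $$ (i, p i)))"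
    by (rule det_def'[OF A])
  also have "\<dots> = 0"
  proof (rule sum.neutral, safe)
    fix p assume p: "p permutes {0..<Suc n}"
    have "p 0 < Suc n" using p by (simp add: permutes_in_image)
    hence "(\<Prod>i = 0..<Suc n. A $$ (i, p i)) = 0"
      by (intro prod_zero) (auto intro!: bexI[of _ 0] simp: z)
    thus "signof p * (\<Prod>i = 0..<Suc n. A $$ (i, p i)) = 0" by simp
  qed
  finally show ?thesis .
qed

definition gram :: "nat \<Rightarrow> nat \<Rightarrow> (nat \<Rightarrow> nat \<Rightarrow> real) \<Rightarrow> real mat" where
  "gram n m v = mat n n (\<lambda>(i,j). \<Sum>l<m. v i l * v j l)"

lemma hadamard_gram:
  "det (gram n m v) \<le> (\<Prod>i<n. \<Sum>l<m. (v i l)^2)"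
proof (induction n arbitrary: v)
  case 0
  then show ?case by (simp add: gram_def)
next
  case (Suc n)
  define g where "g = (\<Sum>l<m. (v 0 l)^2)"
  have g0: "g \<ge> 0" unfolding g_def by (intro sum_nonneg) auto
  have nn: "\<And>i. 0 \<le> (\<Sum>l<m. (v i l)^2)" by (intro sum_nonneg) auto
  have Gc: "gram (Suc n) m v \<in> carrier_mat (Suc n) (Suc n)" by (simp add: gram_def)
  show ?case
  proof (cases "g = 0")
    case True
    hence "\<And>l. l < m \<Longrightarrow> v 0 l = 0"
      unfolding g_def by (subst (asm) sum_nonneg_eq_0_iff) auto
    hence "det (gram (Suc n) m v) = 0"
      by (intro det_zero_row0[OF Gc]) (simp add: gram_def)
    then show ?thesis by (simp add: prod_nonneg nn)
  next
    case False
    hence gp: "g > 0" using g0 by simp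
    define c where "c i = (\<Sum>l<m. v (Suc i) l * v 0 l) / g" for i
    define w where "w i l = v (Suc i) l - c i * v 0 l" for i l
    have G00: "gram (Suc n) m v $$ (0,0) = g" by (simp add: gram_def g_def power2_eq_square)
    have S: "mat n n (\<lambda>(i,j). gram (Suc n) m v $$ (Suc i, Suc j) - gram (Suc n) m v $$ (Suc i, 0) * gram (Suc n) m v $$ (0, Suc j) / gram (Suc n) m v $$ (0,0))
       = gram n m w"
    proof (rule eq_matI)
      fix i j assume i: "i < dim_row (gram n m w)" and j: "j < dim_col (gram n m w)"
      hence i': "i < n" and j': "j < n" by (auto simp: gram_def)
      have "(\<Sum>l<m. w i l * w j l) = (\<Sum>l<m. v (Suc i) l * v (Suc j) l) - c j * (\<Sum>l<m. v (Suc i) l * v 0 l)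
          - c i * (\<Sum>l<m. v (Suc j) l * v 0 l) + c i * c j * g"
        unfolding w_def g_def
        by (simp add: algebra_simps power2_eq_square sum_distrib_left sum.distrib sum_subtractf)
      also have "\<dots> = (\<Sum>l<m. v (Suc i) l * v (Suc j) l) - (\<Sum>l<m. v (Suc i) l * v 0 l) * (\<Sum>l<m. v 0 l * v (Suc j) l) / g"
        using gp unfolding c_def by (simp add: field_simps mult.commute)
      finally show "mat n n (\<lambda>(i,j). gram (Suc n) m v $$ (Suc i, Suc j) - gram (Suc n) m v $$ (Suc i, 0) * gram (Suc n) m v $$ (0, Suc j) / gram (Suc n) m v $$ (0,0)) $$ (i,j) = gram n m w $$ (i,j)"
        using i' j' by (simp add: gram_def g_def power2_eq_square)
    qed (auto simp: gram_def)
    have "det (gram (Suc n) m v) = g * det (gram n m w)"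
      using det_schur[OF Gc] G00 False S by simp
    also have "\<dots> \<le> g * (\<Prod>i<n. \<Sum>l<m. (w i l)^2)"
      using Suc.IH[of w] g0 by (simp add: mult_left_mono)
    also have "(\<Prod>i<n. \<Sum>l<m. (w i l)^2) \<le> (\<Prod>i<n. \<Sum>l<m. (v (Suc i) l)^2)"
    proof (rule prod_mono, rule conjI)
      fix i
      show "0 \<le> (\<Sum>l<m. (w i l)^2)" by (intro sum_nonneg) auto
      have "(\<Sum>l<m. (w i l)^2) = (\<Sum>l<m. (v (Suc i) l)^2) - 2 * c i * (\<Sum>l<m. v (Suc i) l * v 0 l) + (c i)^2 * g"
        unfolding w_def g_def
        by (simp add: algebra_simps power2_eq_square sum_distrib_left sum.distrib sum_subtractf)
      also have "\<dots> = (\<Sum>l<m. (v (Suc i) l)^2) - (\<Sum>l<m. v (Suc i) l * v 0 l)^2 / g"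
        using gp unfolding c_def by (simp add: field_simps power2_eq_square)
      also have "\<dots> \<le> (\<Sum>l<m. (v (Suc i) l)^2)" using gp by simp
      finally show "(\<Sum>l<m. (w i l)^2) \<le> (\<Sum>l<m. (v (Suc i) l)^2)" .
    qed
    hence "g * (\<Prod>i<n. \<Sum>l<m. (w i l)^2) \<le> g * (\<Prod>i<n. \<Sum>l<m. (v (Suc i) l)^2)"
      using g0 by (simp add: mult_left_mono)
    also have "g * (\<Prod>i<n. \<Sum>l<m. (v (Suc i) l)^2) = (\<Prod>i<Suc n. \<Sum>l<m. (v i l)^2)"
      unfolding prod.lessThan_Suc_shift g_def by simp
    finally show ?thesis .
  qed
qed

lemma cauchy_schur_entry:
  fixes x y z w :: real
  assumes "x \<noteq> y" "x \<noteq> w" "z \<noteq> y" "z \<noteq> w"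
  shows "1/(x-y) - (1/(x-w))*(1/(z-y))/(1/(z-w)) = ((x - z)/(x - w)) * ((w - y)/(z - y)) * (1/(x-y))"
proof -
  have h: "x - y \<noteq> 0" "x - w \<noteq> 0" "z - y \<noteq> 0" "z - w \<noteq> 0" using assms by auto
  have "1/(x-y) - (1/(x-w))*(1/(z-y))/(1/(z-w)) = 1/(x-y) - (z-w)/((x-w)*(z-y))"
    using h by simp
  also have "\<dots> = ((x-w)*(z-y) - (z-w)*(x-y)) / ((x-y)*((x-w)*(z-y)))"
    using h by (simp add: diff_frac_eq)
  also have "(x-w)*(z-y) - (z-w)*(x-y) = (x-z)*(w-y)" by (simp add: algebra_simps)
  also have "(x-z)*(w-y) / ((x-y)*((x-w)*(z-y))) = ((x - z)/(x - w)) * ((w - y)/(z - y)) * (1/(x-y))"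
    by simp
  finally show ?thesis .
qed

lemma alg_aux:
  fixes d pu pv x q r y :: real
  assumes "d \<noteq> 0"
  shows "(1/d * (pu*pv*x))^2 * ((d*q)*(r*y))^2 = ((pu*r)*(pv*q))^2*(x^2*y^2)"
proof -
  have "(1/d * (pu*pv*x))^2 * ((d*q)*(r*y))^2 = (1/d * d)^2 * ((pu*r)*(pv*q))^2*(x^2*y^2)"
    by (simp only: power_mult_distrib mult_ac)
  thus ?thesis using assms by simp
qed

lemma det_sq_le:
  fixes f :: "nat \<Rightarrow> nat \<Rightarrow> real"
  shows "(det (mat n n (\<lambda>(i,j). f i j)))^2 \<le> (\<Prod>i<n. \<Sum>l<n. (f i l)^2)"
proof -
  define C where "C = mat n n (\<lambda>(i,j). f i j)"
  have Cc: "C \<in> carrier_mat n n" by (simp add: C_def)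
  have "C * transpose_mat C = gram n n f"
    by (rule eq_matI) (auto simp: C_def gram_def scalar_prod_def atLeast0LessThan)
  hence "det (gram n n f) = det C * det C"
    using det_mult[OF Cc transpose_carrier_mat[THEN iffD2, OF Cc]] det_transpose[OF Cc] by simp
  thus ?thesis using hadamard_gram[of n n f] by (simp add: C_def power2_eq_square)
qed

lemma det_scale:
  fixes f :: "nat \<Rightarrow> nat \<Rightarrow> real"
  shows "det (mat n n (\<lambda>(i,j). u i * v j * f i j)) = (\<Prod>i<n. u i) * (\<Prod>j<n. v j) * det (mat n n (\<lambda>(i,j). f i j))"
proof -
  have "det (mat n n (\<lambda>(i,j). u i * v j * f i j)) = (\<Sum>p\<in>{p. p permutes {0..<n}}. signof p * (\<Prod>i = 0..<n. u i * v (p i) * f i (p i)))"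
    by (subst det_def'[of _ n]) auto
  also have "\<dots> = (\<Sum>p\<in>{p. p permutes {0..<n}}. (\<Prod>i<n. u i) * (\<Prod>j<n. v j) * (signof p * (\<Prod>i = 0..<n. f i (p i))))"
  proof (rule sum.cong[OF refl])
    fix p assume "p \<in> {p. p permutes {0..<n}}"
    hence p: "p permutes {0..<n}" by simp
    have "(\<Prod>i = 0..<n. v (p i)) = (\<Prod>j = 0..<n. v j)"
      using prod.permute[OF p, of v] by (simp add: comp_def)
    thus "signof p * (\<Prod>i = 0..<n. u i * v (p i) * f i (p i)) = (\<Prod>i<n. u i) * (\<Prod>j<n. v j) * (signof p * (\<Prod>i = 0..<n. f i (p i)))"
      by (simp add: prod.distrib atLeast0LessThan)
  qed
  also have "\<dots> = (\<Prod>i<n. u i) * (\<Prod>j<n. v j) * det (mat n n (\<lambda>(i,j). f i j))"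
    by (subst det_def'[of _ n]) (auto simp: sum_distrib_left)
  finally show ?thesis .
qed

definition PP :: "nat \<Rightarrow> (nat \<Rightarrow> real) \<Rightarrow> real" where
  "PP n a = (\<Prod>i<n. \<Prod>j<n. if i = j then 1 else \<bar>a i - a j\<bar>)"

lemma PP_Suc: "PP (Suc n) a = (\<Prod>i<n. (a (Suc i) - a 0)^2) * PP n (\<lambda>i. a (Suc i))"
proof -
  have "PP (Suc n) a = (\<Prod>j<n. \<bar>a 0 - a (Suc j)\<bar>) * ((\<Prod>i<n. \<bar>a (Suc i) - a 0\<bar>) * PP n (\<lambda>i. a (Suc i)))"
    unfolding PP_def by (simp add: prod.lessThan_Suc_shift prod.distrib del: prod.lessThan_Suc)
  also have "(\<Prod>j<n. \<bar>a 0 - a (Suc j)\<bar>) * (\<Prod>i<n. \<bar>a (Suc i) - a 0\<bar>) = (\<Prod>i<n. (a (Suc i) - a 0)^2)"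
    unfolding prod.distrib[symmetric] by (rule prod.cong) (auto simp: abs_minus_commute power2_eq_square algebra_simps)
  hence "(\<Prod>j<n. \<bar>a 0 - a (Suc j)\<bar>) * ((\<Prod>i<n. \<bar>a (Suc i) - a 0\<bar>) * PP n (\<lambda>i. a (Suc i))) = (\<Prod>i<n. (a (Suc i) - a 0)^2) * PP n (\<lambda>i. a (Suc i))"
    by (simp add: mult.assoc[symmetric])
  finally show ?thesis .
qed

lemma cauchy_det:
  fixes a b :: "nat \<Rightarrow> real"
  assumes "\<And>i j. i < n \<Longrightarrow> j < n \<Longrightarrow> a i \<noteq> b j"
  shows "(det (mat n n (\<lambda>(i,j). 1 / (a i - b j))))^2 * (\<Prod>i<n. \<Prod>j<n. a i - b j)^2 = PP n a * PP n b"
  using assms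
proof (induction n arbitrary: a b)
  case 0
  then show ?case by (simp add: PP_def)
next
  case (Suc n)
  define u where "u i = (a (Suc i) - a 0) / (a (Suc i) - b 0)" for i
  define v where "v j = (b 0 - b (Suc j)) / (a 0 - b (Suc j))" for j
  define X' where "X' = det (mat n n (\<lambda>(i,j). 1 / (a (Suc i) - b (Suc j))))"
  define DD' where "DD' = (\<Prod>i<n. \<Prod>j<n. a (Suc i) - b (Suc j))"
  have ne: "\<And>i j. i < Suc n \<Longrightarrow> j < Suc n \<Longrightarrow> a i - b j \<noteq> 0" using Suc.prems by simp
  have IH: "X'^2 * DD'^2 = PP n (\<lambda>i. a (Suc i)) * PP n (\<lambda>i. b (Suc i))"
    unfolding X'_def DD'_def by (rule Suc.IH) (use Suc.prems in auto)
  have Cc: "mat (Suc n) (Suc n) (\<lambda>(i,j). 1 / (a i - b j)) \<in> carrier_mat (Suc n) (Suc n)" by simp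
  have S: "mat n n (\<lambda>(i,j). mat (Suc n) (Suc n) (\<lambda>(i,j). 1 / (a i - b j)) $$ (Suc i, Suc j)
      - mat (Suc n) (Suc n) (\<lambda>(i,j). 1 / (a i - b j)) $$ (Suc i, 0) * mat (Suc n) (Suc n) (\<lambda>(i,j). 1 / (a i - b j)) $$ (0, Suc j)
        / mat (Suc n) (Suc n) (\<lambda>(i,j). 1 / (a i - b j)) $$ (0,0))
    = mat n n (\<lambda>(i,j). u i * v j * (1 / (a (Suc i) - b (Suc j))))"
  proof (rule eq_matI)
    fix i j assume "i < dim_row (mat n n (\<lambda>(i,j). u i * v j * (1 / (a (Suc i) - b (Suc j)))))"
      "j < dim_col (mat n n (\<lambda>(i,j). u i * v j * (1 / (a (Suc i) - b (Suc j)))))"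
    hence ij: "i < n" "j < n" by auto
    have h1: "a (Suc i) - b (Suc j) \<noteq> 0" "a (Suc i) - b 0 \<noteq> 0" "a 0 - b (Suc j) \<noteq> 0" "a 0 - b 0 \<noteq> 0"
      using ne ij by auto
    show "mat n n (\<lambda>(i,j). mat (Suc n) (Suc n) (\<lambda>(i,j). 1 / (a i - b j)) $$ (Suc i, Suc j)
      - mat (Suc n) (Suc n) (\<lambda>(i,j). 1 / (a i - b j)) $$ (Suc i, 0) * mat (Suc n) (Suc n) (\<lambda>(i,j). 1 / (a i - b j)) $$ (0, Suc j)
        / mat (Suc n) (Suc n) (\<lambda>(i,j). 1 / (a i - b j)) $$ (0,0)) $$ (i,j)
      = mat n n (\<lambda>(i,j). u i * v j * (1 / (a (Suc i) - b (Suc j)))) $$ (i,j)"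
      using ij ne[of "Suc i" "Suc j"] ne[of "Suc i" 0] ne[of 0 "Suc j"] ne[of 0 0] cauchy_schur_entry[where x="a (Suc i)" and y="b (Suc j)" and z="a 0" and w="b 0"]
      unfolding u_def v_def by (simp add: mult.commute)
  qed auto
  have X: "det (mat (Suc n) (Suc n) (\<lambda>(i,j). 1 / (a i - b j))) = 1 / (a 0 - b 0) * ((\<Prod>i<n. u i) * (\<Prod>j<n. v j) * X')"
  proof -
    have X0: "det (mat (Suc n) (Suc n) (\<lambda>(i,j). 1 / (a i - b j))) = mat (Suc n) (Suc n) (\<lambda>(i,j). 1 / (a i - b j)) $$ (0,0) * det (mat n n (\<lambda>(i,j). mat (Suc n) (Suc n) (\<lambda>(i,j). 1 / (a i - b j)) $$ (Suc i, Suc j)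
      - mat (Suc n) (Suc n) (\<lambda>(i,j). 1 / (a i - b j)) $$ (Suc i, 0) * mat (Suc n) (Suc n) (\<lambda>(i,j). 1 / (a i - b j)) $$ (0, Suc j)
        / mat (Suc n) (Suc n) (\<lambda>(i,j). 1 / (a i - b j)) $$ (0,0)))"
      by (rule det_schur[OF Cc]) (use ne[of 0 0] in simp)
    show ?thesis unfolding X0 S det_scale X'_def by simp
  qed
  have DD: "(\<Prod>i<Suc n. \<Prod>j<Suc n. a i - b j) = ((a 0 - b 0) * (\<Prod>j<n. a 0 - b (Suc j))) * ((\<Prod>i<n. a (Suc i) - b 0) * DD')"
    unfolding DD'_def by (simp add: prod.lessThan_Suc_shift prod.distrib del: prod.lessThan_Suc)
  have U: "(\<Prod>i<n. u i) * (\<Prod>i<n. a (Suc i) - b 0) = (\<Prod>i<n. a (Suc i) - a 0)"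
    unfolding prod.distrib[symmetric] u_def by (rule prod.cong) (use ne in auto)
  have V: "(\<Prod>j<n. v j) * (\<Prod>j<n. a 0 - b (Suc j)) = (\<Prod>j<n. b 0 - b (Suc j))"
    unfolding prod.distrib[symmetric] v_def by (rule prod.cong) (use ne in auto)
  have "(det (mat (Suc n) (Suc n) (\<lambda>(i,j). 1 / (a i - b j))))^2 * (\<Prod>i<Suc n. \<Prod>j<Suc n. a i - b j)^2
      = (((\<Prod>i<n. u i) * (\<Prod>i<n. a (Suc i) - b 0)) * ((\<Prod>j<n. v j) * (\<Prod>j<n. a 0 - b (Suc j))))^2 * (X'^2 * DD'^2)"
    unfolding X DD by (rule alg_aux) (use ne[of 0 0] in simp)
  also have "\<dots> = (\<Prod>i<n. a (Suc i) - a 0)^2 * (\<Prod>j<n. b 0 - b (Suc j))^2 * (PP n (\<lambda>i. a (Suc i)) * PP n (\<lambda>i. b (Suc i)))"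
    unfolding U V IH by (simp add: power_mult_distrib)
  also have "(\<Prod>j<n. b 0 - b (Suc j))^2 = (\<Prod>j<n. (b (Suc j) - b 0)^2)"
    unfolding prod_power_distrib by (rule prod.cong) (auto simp: power2_commute)
  also have "(\<Prod>i<n. a (Suc i) - a 0)^2 = (\<Prod>i<n. (a (Suc i) - a 0)^2)"
    by (simp add: prod_power_distrib)
  also have "(\<Prod>i<n. (a (Suc i) - a 0)^2) * (\<Prod>j<n. (b (Suc j) - b 0)^2) * (PP n (\<lambda>i. a (Suc i)) * PP n (\<lambda>i. b (Suc i))) = PP (Suc n) a * PP (Suc n) b"
    unfolding PP_Suc by simp
  finally show ?case .
qed


lemma sum_inv_sq_le: "N \<ge> 1 \<Longrightarrow> (\<Sum>s=1..N. 1/(real s)^2) \<le> 2 - 1/real N"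
proof (induction N rule: dec_induct)
  case base
  then show ?case by simp
next
  case (step n)
  have "(\<Sum>s=1..Suc n. 1/(real s)^2) = (\<Sum>s=1..n. 1/(real s)^2) + 1/(real (Suc n))^2" by simp
  also have "\<dots> \<le> 2 - 1/real n + 1/(real (Suc n))^2" using step.IH by simp
  also have "\<dots> \<le> 2 - 1/real (Suc n)"
  proof -
    have n: "real n \<ge> 1" using step.hyps by simp
    have "1/(real (Suc n))^2 \<le> 1/(real n * real (Suc n))"
      using n by (intro divide_left_mono) (auto simp: power2_eq_square)
    also have "\<dots> = 1/real n - 1/real (Suc n)"
      using n by (simp add: field_simps)
    finally have "1/(real (Suc n))^2 \<le> 1/real n - 1/real (Suc n)" .
    thus ?thesis by simp
  qed
  finally show ?case .
qed

lemma sum_inv_sq_set: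
  assumes "finite S" "\<forall>s\<in>S. s > (0::nat)"
  shows "(\<Sum>s\<in>S. 1/(real s)^2) \<le> 2"
proof (cases "S = {}")
  case True then show ?thesis by simp
next
  case False
  define N where "N = Max S"
  have "N \<in> S" unfolding N_def by (rule Max_in[OF assms(1) False])
  hence N1: "N \<ge> 1" using assms(2) by (auto simp: Suc_le_eq)
  have sub: "S \<subseteq> {1..N}" using assms unfolding N_def by (auto simp: Suc_le_eq)
  have "(\<Sum>s\<in>S. 1/(real s)^2) \<le> (\<Sum>s=1..N. 1/(real s)^2)"
    by (rule sum_mono2[OF _ sub]) auto
  also have "\<dots> \<le> 2 - 1/real N" by (rule sum_inv_sq_le[OF N1])
  also have "\<dots> \<le> 2" by simp
  finally show ?thesis .
qed

lemma sum_inv_sq_int: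
  assumes T: "finite T" and z: "0 \<notin> T"
  shows "(\<Sum>t\<in>T. 1/(real_of_int t)^2) \<le> 4"
proof -
  define P where "P = T \<inter> {t. t > 0}"
  define M where "M = T \<inter> {t. t < 0}"
  have TPM: "T = P \<union> M" "P \<inter> M = {}" using z unfolding P_def M_def by (auto simp: linorder_neq_iff)
    (metis linorder_neqE_linordered_idom)
  have fP: "finite P" "finite M" using T unfolding P_def M_def by auto
  have "(\<Sum>t\<in>P. 1/(real_of_int t)^2) = (\<Sum>s\<in>nat ` P. 1/(real s)^2)"
    by (subst sum.reindex) (auto simp: P_def inj_on_def)
  also have "\<dots> \<le> 2" by (rule sum_inv_sq_set) (use fP in \<open>auto simp: P_def\<close>)
  finally have 1: "(\<Sum>t\<in>P. 1/(real_of_int t)^2) \<le> 2" .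
  have "(\<Sum>t\<in>M. 1/(real_of_int t)^2) = (\<Sum>s\<in>(\<lambda>t. nat (-t)) ` M. 1/(real s)^2)"
    by (subst sum.reindex) (auto simp: M_def inj_on_def)
  also have "\<dots> \<le> 2" by (rule sum_inv_sq_set) (use fP in \<open>auto simp: M_def\<close>)
  finally have 2: "(\<Sum>t\<in>M. 1/(real_of_int t)^2) \<le> 2" .
  have "(\<Sum>t\<in>T. 1/(real_of_int t)^2) = (\<Sum>t\<in>P. 1/(real_of_int t)^2) + (\<Sum>t\<in>M. 1/(real_of_int t)^2)"
    unfolding TPM(1) by (rule sum.union_disjoint) (use fP TPM in auto)
  thus ?thesis using 1 2 by simp
qed

lemma row_bound:
  fixes x :: int and b :: "nat \<Rightarrow> int"
  assumes "inj_on b {..<k}" "\<And>j. j < k \<Longrightarrow> b j \<noteq> x"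
  shows "(\<Sum>l<k. (1 / (real_of_int x - real_of_int (b l)))^2) \<le> 4"
proof -
  have inj: "inj_on (\<lambda>l. x - b l) {..<k}" using assms(1) by (auto simp: inj_on_def)
  have "(\<Sum>l<k. (1 / (real_of_int x - real_of_int (b l)))^2) = (\<Sum>l<k. 1 / (real_of_int (x - b l))^2)"
    by (simp add: power_one_over)
  also have "\<dots> = (\<Sum>t\<in>(\<lambda>l. x - b l) ` {..<k}. 1/(real_of_int t)^2)"
    by (subst sum.reindex[OF inj]) simp
  also have "\<dots> \<le> 4"
  proof (rule sum_inv_sq_int)
    have "\<forall>l<k. x - b l \<noteq> 0" using assms(2) by fastforce
    thus "0 \<notin> (\<lambda>l. x - b l) ` {..<k}" by auto
  qed simp
  finally show ?thesis .
qed

lemma prod_pos_ints: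
  fixes U :: "int set"
  assumes "finite U" "\<forall>u\<in>U. u \<ge> 1"
  shows "fact (card U) \<le> \<Prod>U"
  using assms
proof (induction "card U" arbitrary: U)
  case 0
  then show ?case by (simp add: prod_ge_1)
next
  case (Suc n)
  hence ne: "U \<noteq> {}" by auto
  define M where "M = Max U"
  have MU: "M \<in> U" using Max_in[OF Suc.prems(1) ne] M_def by simp
  have sub: "U \<subseteq> {1..M}" using Suc.prems M_def by auto
  have M1: "M \<ge> 1" using MU Suc.prems(2) by simp
  have "card U \<le> card {1..M}" using card_mono[OF _ sub] by simp
  hence "card U \<le> nat M" by simp
  hence cM: "int (Suc n) \<le> M" using Suc.hyps M1 by linarith
  have c': "n = card (U - {M})" using Suc.hyps MU Suc.prems by simp
  have IH: "fact n \<le> \<Prod>(U - {M})" using Suc.hyps(1)[OF c'] Suc.prems c' by auto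
  have "fact (card U) = (fact (Suc n) :: int)" using Suc.hyps(2) by simp
  also have "\<dots> = int (Suc n) * fact n" by (simp only: fact_Suc of_nat_Suc)
  also have "\<dots> \<le> M * \<Prod>(U - {M})"
    by (rule mult_mono[OF cM IH]) (use M1 in auto)
  also have "\<dots> = \<Prod>U" using prod.remove[OF Suc.prems(1) MU, of id] by simp
  finally show ?case .
qed

lemma vdm_bound:
  fixes S :: "int set"
  assumes "finite S"
  shows "(\<Prod>m<card S. fact m)^2 \<le> (\<Prod>x\<in>S. \<Prod>y\<in>S-{x}. \<bar>x - y\<bar>)"
  using assms
proof (induction "card S" arbitrary: S)
  case 0
  then show ?case by simp
next
  case (Suc n)
  hence ne: "S \<noteq> {}" by auto
  define M where "M = Max S"
  have MU: "M \<in> S" using Max_in[OF Suc.prems(1) ne] M_def by simp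
  define S' where "S' = S - {M}"
  have fS': "finite S'" using Suc.prems S'_def by simp
  have cS': "n = card S'" using Suc.hyps MU Suc.prems S'_def by simp
  have IH: "(\<Prod>m<n. fact m)^2 \<le> (\<Prod>x\<in>S'. \<Prod>y\<in>S'-{x}. \<bar>x - y\<bar>)"
    using Suc.hyps(1)[OF cS' fS'] cS' by simp
  have ltM: "\<And>y. y \<in> S' \<Longrightarrow> y < M"
    using Suc.prems S'_def M_def by (auto simp: order.not_eq_order_implies_strict)
  have S: "S = insert M S'" using MU S'_def by auto
  have MS': "M \<notin> S'" using S'_def by simp
  have "(\<Prod>x\<in>S. \<Prod>y\<in>S-{x}. \<bar>x - y\<bar>) = (\<Prod>y\<in>S'. \<bar>M - y\<bar>) * (\<Prod>x\<in>S'. \<Prod>y\<in>S-{x}. \<bar>x - y\<bar>)"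
    unfolding S using fS' MS' by (simp add: insert_Diff_if)
  also have "(\<Prod>x\<in>S'. \<Prod>y\<in>S-{x}. \<bar>x - y\<bar>) = (\<Prod>x\<in>S'. \<bar>x - M\<bar> * (\<Prod>y\<in>S'-{x}. \<bar>x - y\<bar>))"
  proof (rule prod.cong[OF refl])
    fix x assume x: "x \<in> S'"
    have "S - {x} = insert M (S' - {x})" using S x MS' by auto
    thus "(\<Prod>y\<in>S-{x}. \<bar>x - y\<bar>) = \<bar>x - M\<bar> * (\<Prod>y\<in>S'-{x}. \<bar>x - y\<bar>)"
      using fS' MS' by simp
  qed
  also have "\<dots> = (\<Prod>x\<in>S'. \<bar>x - M\<bar>) * (\<Prod>x\<in>S'. \<Prod>y\<in>S'-{x}. \<bar>x - y\<bar>)"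
    by (simp add: prod.distrib)
  finally have eq: "(\<Prod>x\<in>S. \<Prod>y\<in>S-{x}. \<bar>x - y\<bar>) = (\<Prod>y\<in>S'. M - y)^2 * (\<Prod>x\<in>S'. \<Prod>y\<in>S'-{x}. \<bar>x - y\<bar>)"
  proof -
    assume h: "(\<Prod>x\<in>S. \<Prod>y\<in>S-{x}. \<bar>x - y\<bar>) = (\<Prod>y\<in>S'. \<bar>M - y\<bar>) * ((\<Prod>x\<in>S'. \<bar>x - M\<bar>) * (\<Prod>x\<in>S'. \<Prod>y\<in>S'-{x}. \<bar>x - y\<bar>))"
    have 1: "(\<Prod>y\<in>S'. \<bar>M - y\<bar>) = (\<Prod>y\<in>S'. M - y)"
      by (rule prod.cong) (use ltM in force)+
    have 2: "(\<Prod>x\<in>S'. \<bar>x - M\<bar>) = (\<Prod>y\<in>S'. M - y)"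
      by (rule prod.cong) (use ltM in force)+
    show ?thesis unfolding h 1 2 by (simp add: power2_eq_square)
  qed
  have "fact n \<le> \<Prod>((\<lambda>y. M - y) ` S')"
  proof -
    have "card ((\<lambda>y. M - y) ` S') = n" using cS' by (simp add: card_image inj_on_def)
    moreover have "fact (card ((\<lambda>y. M - y) ` S')) \<le> \<Prod>((\<lambda>y. M - y) ` S')"
      by (rule prod_pos_ints) (use fS' in \<open>auto dest: ltM\<close>)
    ultimately show ?thesis by simp
  qed
  also have "\<Prod>((\<lambda>y. M - y) ` S') = (\<Prod>y\<in>S'. M - y)"
    by (subst prod.reindex) (auto simp: inj_on_def)
  finally have fM: "fact n \<le> (\<Prod>y\<in>S'. M - y)" .
  have "(\<Prod>m<card S. fact m)^2 = (fact n)^2 * (\<Prod>m<n. fact m)^2"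
    using Suc.hyps(2)[symmetric] by (simp add: power_mult_distrib mult.commute)
  also have "\<dots> \<le> (\<Prod>y\<in>S'. M - y)^2 * (\<Prod>x\<in>S'. \<Prod>y\<in>S'-{x}. \<bar>x - y\<bar>)"
    by (rule mult_mono[OF power_mono[OF fM] IH]) auto
  also have "\<dots> = (\<Prod>x\<in>S. \<Prod>y\<in>S-{x}. \<bar>x - y\<bar>)" using eq by simp
  finally show ?case .
qed


definition SP :: "int set \<Rightarrow> int" where
  "SP X = (\<Prod>x\<in>X. \<Prod>y\<in>X-{x}. \<bar>x - y\<bar>)"

lemma PP_set:
  fixes c :: "nat \<Rightarrow> int"
  assumes inj: "inj_on c {..<N}"
  shows "PP N (\<lambda>i. real_of_int (c i)) = real_of_int (SP (c ` {..<N}))"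
proof -
  have "PP N (\<lambda>i. real_of_int (c i)) = (\<Prod>i<N. \<Prod>j\<in>{..<N}-{i}. real_of_int \<bar>c i - c j\<bar>)"
    unfolding PP_def
    by (rule prod.cong[OF refl], rule prod.mono_neutral_cong_right) auto
  also have "\<dots> = (\<Prod>i<N. \<Prod>y\<in>c ` {..<N} - {c i}. real_of_int \<bar>c i - y\<bar>)"
  proof (rule prod.cong[OF refl])
    fix i assume i: "i \<in> {..<N}"
    have e: "c ` {..<N} - {c i} = c ` ({..<N} - {i})" using inj i by (auto simp: inj_on_def)
    have inj2: "inj_on c ({..<N} - {i})" using inj by (rule inj_on_subset) auto
    show "(\<Prod>j\<in>{..<N}-{i}. real_of_int \<bar>c i - c j\<bar>) = (\<Prod>y\<in>c ` {..<N} - {c i}. real_of_int \<bar>c i - y\<bar>)"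
      unfolding e prod.reindex[OF inj2] by simp
  qed
  also have "\<dots> = (\<Prod>x\<in>c ` {..<N}. \<Prod>y\<in>c ` {..<N} - {x}. real_of_int \<bar>x - y\<bar>)"
    unfolding prod.reindex[OF inj] by simp
  also have "\<dots> = real_of_int (SP (c ` {..<N}))" unfolding SP_def by simp
  finally show ?thesis .
qed

lemma SP_union:
  fixes A B :: "int set"
  assumes "finite A" "finite B" "A \<inter> B = {}"
  shows "SP (A \<union> B) = SP A * SP B * (\<Prod>x\<in>A. \<Prod>y\<in>B. \<bar>x - y\<bar>)^2"
proof -
  have "SP (A \<union> B) = (\<Prod>x\<in>A. \<Prod>y\<in>(A \<union> B)-{x}. \<bar>x - y\<bar>) * (\<Prod>x\<in>B. \<Prod>y\<in>(A \<union> B)-{x}. \<bar>x - y\<bar>)"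
    unfolding SP_def using assms by (simp add: prod.union_disjoint)
  also have "(\<Prod>x\<in>A. \<Prod>y\<in>(A \<union> B)-{x}. \<bar>x - y\<bar>) = (\<Prod>x\<in>A. (\<Prod>y\<in>A-{x}. \<bar>x - y\<bar>) * (\<Prod>y\<in>B. \<bar>x - y\<bar>))"
  proof (rule prod.cong[OF refl])
    fix x assume x: "x \<in> A"
    have e: "(A \<union> B) - {x} = (A - {x}) \<union> B" using x assms(3) by auto
    show "(\<Prod>y\<in>(A \<union> B)-{x}. \<bar>x - y\<bar>) = (\<Prod>y\<in>A-{x}. \<bar>x - y\<bar>) * (\<Prod>y\<in>B. \<bar>x - y\<bar>)"
      unfolding e by (rule prod.union_disjoint) (use assms in auto)
  qed
  also have "(\<Prod>x\<in>B. \<Prod>y\<in>(A \<union> B)-{x}. \<bar>x - y\<bar>) = (\<Prod>x\<in>B. (\<Prod>y\<in>B-{x}. \<bar>x - y\<bar>) * (\<Prod>y\<in>A. \<bar>x - y\<bar>))"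
  proof (rule prod.cong[OF refl])
    fix x assume x: "x \<in> B"
    have e: "(A \<union> B) - {x} = (B - {x}) \<union> A" using x assms(3) by auto
    show "(\<Prod>y\<in>(A \<union> B)-{x}. \<bar>x - y\<bar>) = (\<Prod>y\<in>B-{x}. \<bar>x - y\<bar>) * (\<Prod>y\<in>A. \<bar>x - y\<bar>)"
      unfolding e by (rule prod.union_disjoint) (use assms in auto)
  qed
  also have "(\<Prod>x\<in>B. \<Prod>y\<in>A. \<bar>x - y\<bar>) = (\<Prod>x\<in>A. \<Prod>y\<in>B. \<bar>x - y\<bar>)"
    by (subst prod.swap) (simp add: abs_minus_commute)
  ultimately show ?thesis unfolding SP_def
    by (simp add: prod.distrib power2_eq_square mult_ac)
qed

theorem lemma3p2:
  fixes k :: nat and a b :: "nat \<Rightarrow> int"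
  assumes "k \<ge> 1"
    and "inj_on a {1..k}" and "inj_on b {1..k}"
    and "a ` {1..k} \<inter> b ` {1..k} = {}"
  shows "real_of_int (\<Prod>i=1..k. \<Prod>j=1..k. \<bar>a i - b j\<bar>)
           \<ge> (2/3) ^ k * sqrt (\<Prod>m=1..2*k-1. fact m)"
proof -
  define a' where "a' i = a (Suc i)" for i
  define b' where "b' i = b (Suc i)" for i
  have injS: "inj_on Suc {..<k}" by simp
  have ia: "inj_on a' {..<k}" unfolding a'_def
    using comp_inj_on[OF injS, of a] assms(2) by (simp add: image_Suc_lessThan comp_def)
  have ib: "inj_on b' {..<k}" unfolding b'_def
    using comp_inj_on[OF injS, of b] assms(3) by (simp add: image_Suc_lessThan comp_def)
  have A: "a' ` {..<k} = a ` {1..k}" unfolding a'_def image_Suc_lessThan[symmetric] by auto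
  have B: "b' ` {..<k} = b ` {1..k}" unfolding b'_def image_Suc_lessThan[symmetric] by auto
  have neq: "a' i \<noteq> b' j" if "i < k" "j < k" for i j
  proof -
    have "a' i \<in> a ` {1..k}" "b' j \<in> b ` {1..k}" using that A B by blast+
    thus ?thesis using assms(4) by (metis disjoint_iff)
  qed
  define D where "D = (\<Prod>i=1..k. \<Prod>j=1..k. \<bar>a i - b j\<bar>)"
  have D': "D = (\<Prod>i<k. \<Prod>j<k. \<bar>a' i - b' j\<bar>)"
    unfolding D_def image_Suc_lessThan[symmetric] a'_def b'_def
    by (simp add: prod.reindex[OF injS] comp_def)
  have D0: "D \<ge> 0" unfolding D_def by (intro prod_nonneg) auto
  have DAB: "D = (\<Prod>x\<in>a ` {1..k}. \<Prod>y\<in>b ` {1..k}. \<bar>x - y\<bar>)"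
    unfolding D' A[symmetric] B[symmetric] prod.reindex[OF ia] prod.reindex[OF ib] by simp
  define ar where "ar i = real_of_int (a' i)" for i
  define br where "br i = real_of_int (b' i)" for i
  have cd: "(det (mat k k (\<lambda>(i,j). 1 / (ar i - br j))))^2 * (\<Prod>i<k. \<Prod>j<k. ar i - br j)^2 = PP k ar * PP k br"
    by (rule cauchy_det) (use neq in \<open>auto simp: ar_def br_def\<close>)
  have "(det (mat k k (\<lambda>(i,j). 1 / (ar i - br j))))^2 \<le> (\<Prod>i<k. \<Sum>l<k. (1 / (ar i - br l))^2)"
    by (rule det_sq_le)
  also have "\<dots> \<le> (\<Prod>i<k. 4)"
  proof (rule prod_mono, rule conjI)
    fix i assume i: "i \<in> {..<k}"
    show "0 \<le> (\<Sum>l<k. (1 / (ar i - br l))^2)" by (intro sum_nonneg) auto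
    show "(\<Sum>l<k. (1 / (ar i - br l))^2) \<le> 4"
      unfolding ar_def br_def by (rule row_bound[OF ib]) (use neq i in force)
  qed
  also have "\<dots> = 4^k" by simp
  finally have dle: "(det (mat k k (\<lambda>(i,j). 1 / (ar i - br j))))^2 \<le> 4^k" .
  have DD: "(\<Prod>i<k. \<Prod>j<k. ar i - br j)^2 = (real_of_int D)^2"
  proof -
    have "\<bar>\<Prod>i<k. \<Prod>j<k. ar i - br j\<bar> = real_of_int D"
      unfolding D' ar_def br_def by (simp add: abs_prod)
    thus ?thesis by (metis power2_abs)
  qed
  have PPab: "PP k ar * PP k br \<le> 4^k * (real_of_int D)^2"
    unfolding cd[symmetric] DD by (rule mult_right_mono[OF dle]) simp
  have PPs: "PP k ar * PP k br = real_of_int (SP (a ` {1..k}) * SP (b ` {1..k}))"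
    using PP_set[OF ia] PP_set[OF ib] unfolding ar_def br_def A B by simp
  have card: "card (a ` {1..k} \<union> b ` {1..k}) = 2 * k"
    using assms(2-4) by (simp add: card_Un_disjoint card_image)
  have "(\<Prod>m<2*k. fact m)^2 \<le> SP (a ` {1..k} \<union> b ` {1..k})"
    using vdm_bound[of "a ` {1..k} \<union> b ` {1..k}"] card unfolding SP_def by simp
  also have "\<dots> = SP (a ` {1..k}) * SP (b ` {1..k}) * D^2"
    unfolding DAB by (rule SP_union) (use assms(4) in auto)
  finally have v: "real_of_int ((\<Prod>m<2*k. fact m)^2) \<le> real_of_int (SP (a ` {1..k}) * SP (b ` {1..k}) * D^2)"
    by linarith
  define sf :: real where "sf = (\<Prod>m=1..2*k-1. fact m)"
  have sf_eq: "sf = real_of_int (\<Prod>m<2*k. fact m)"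
  proof -
    have "{..<2*k} = insert 0 {1..2*k-1}" using assms(1) by auto
    hence "(\<Prod>m<2*k. (fact m :: real)) = (\<Prod>m=1..2*k-1. fact m)" by simp
    thus ?thesis unfolding sf_def by (simp add: of_int_prod)
  qed
  have sf0: "sf \<ge> 0" unfolding sf_def by (intro prod_nonneg) auto
  have "sf^2 \<le> (PP k ar * PP k br) * (real_of_int D)^2"
    using v unfolding sf_eq PPs by simp
  also have "\<dots> \<le> (4^k * (real_of_int D)^2) * (real_of_int D)^2"
    by (rule mult_right_mono[OF PPab]) simp
  also have "\<dots> = (2^k * (real_of_int D)^2)^2"
    by (simp add: power_mult_distrib power2_eq_square power_mult[symmetric] mult_ac)
       (simp add: power_mult_distrib[symmetric])
  finally have "sf \<le> 2^k * (real_of_int D)^2"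
    by (rule power2_le_imp_le) simp
  hence s2: "sf / 2^k \<le> (real_of_int D)^2" by (simp add: field_simps)
  have p: "((2/3::real)^k)^2 = ((2/3)^2)^k" by (simp add: power_mult[symmetric] mult.commute)
  have "((2/3)^k * sqrt sf)^2 = (4/9)^k * sf"
    using sf0 by (simp only: power_mult_distrib p real_sqrt_pow2) (simp add: power2_eq_square)
  also have "\<dots> \<le> (1/2)^k * sf"
    by (rule mult_right_mono[OF power_mono]) (use sf0 in auto)
  also have "\<dots> = sf / 2^k" by (simp add: power_divide)
  also have "\<dots> \<le> (real_of_int D)^2" by (rule s2)
  finally have "(2/3)^k * sqrt sf \<le> real_of_int D"
    by (rule power2_le_imp_le) (use D0 in simp)
  thus ?thesis unfolding D_def sf_def by simp
qed

end
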